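(* Consider the single-batch change model described in the context, and suppose that for every batch $e\in\{1,\dots,E\}$ the post-change parameter set $\Lambda^{e}=\{\lambda:|\lambda-\theta^{(e)}|\ge\epsilon\}$ is a finite set (where $\epsilon>0$ is fixed). Then the stopping time $\tau_o=\min_{1\le e\le E}\tau^e$ is asymptotically efficient for this change point problem. That is, there exist thresholds $A=A_\beta$ with $A_\beta=\log\beta\,(1+o(1))$ such that, as $\beta\to\infty$, the stopping time $\tau_o$ with threshold $A_\beta$ satisfies \[ \mathbb{E}_\infty[\tau_o]\ge \beta(1+o(1)), \] and there is a constant $C>0$ such that \[ \mathbb{E}_1[\tau_o]\le C\log\beta\,(1+o(1)), \] whenever the change occurs in a single batch $e$ with post-change parameter $\lambda\in\Lambda^e$.
   Context: Let $\{p(\cdot;\theta):\theta\in\Theta\subseteq\mathbb{R}\}$ be a parametric family of probability densities with respect to a common dominating measure. Assume that for any two distinct parameters the Kullback–Leibler divergence between the corresponding densities is finite and strictly positive. **Period and batches.** Fix a period $T\in\mathbb{N}$ and integers $0=N_0<N_1<\dots<N_E=T$. The batches are $B_e=\{N_{e-1}+1,\dots,N_e\}$ for $e=1,\dots,E$, which partition $\{1,\dots,T\}$. For $k\in\mathbb{N}$, the batch of $k$, written $b(k)$, is the unique $j$ with $r(k)\in B_j$. Here $r(k)\in\{1,\dots,T\}$ is the residue of $k$ modulo $T$, with residue $0$ identified with $T$. There are baseline (pre-change) parameters $\theta^{(1)},\dots,\theta^{(E)}$. **Pre-change model.** Under the no-change measure $\mathbb{P}_\infty$, the observations $Y_1,Y_2,\dots$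 are independent with $Y_k\sim p(\cdot;\theta^{(b(k))})$. This is an independent and periodically identically distributed process with a step-wise constant parameter within each batch. **Single-batch change model.** For a change time $\gamma\in\mathbb{N}$, an unknown affected batch $e$, and a post-change parameter $\lambda\ne\theta^{(e)}$, the measure $\mathbb{P}_\gamma$ makes the $Y_k$ independent with the following laws: - $Y_k\sim p(\cdot;\theta^{(b(k))})$ if $k<\gamma$, or if $k\ge\gamma$ and $b(k)\ne e$; - $Y_k\sim p(\cdot;\lambda)$ if $k\ge\gamma$ and $b(k)=e$. $\mathbb{E}_\gamma$ denotes expectation under $\mathbb{P}_\gamma$. **Statistics and stopping rule.** For $\epsilon>0$ let $\Lambda^e=\{\lambda:|\lambda-\theta^{(e)}|\ge\epsilon\}$. Define \[ W_n^e=\max_{1\le k\le n}\ \sup_{\lambda\in\Lambda^e}\ \sum_{i=k,\ b(i)=e}^{n}\log\frac{p(Y_i;\lambda)}{p(Y_i;\theta^{(e)})}, \] where an empty sum equals $0$. Define $\tau^e=\inf\{n\ge1:W_n^e>A\}$ for a threshold $A>0$, and $\tau_o=\min_{1\le e\le E}\tau^e$. **Asymptotic efficiency.** A family of stopping times $\tau$ indexed by a false-alarm parameter $\beta$ is called asymptotically efficient if, as $\beta\to\infty$, $\mathbb{E}_\infty[\tau]\ge\beta(1+o(1))$, and there exists a constant $C>0$ with $\mathbb{E}_1[\tau]\le C\log\beta\,(1+o(1))$. *)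

theory Defs
  imports "HOL-Probability.Probability"
begin

definition is_density_family :: "'a measure \<Rightarrow> (real \<Rightarrow> 'a \<Rightarrow> real) \<Rightarrow> real set \<Rightarrow> bool" where
  "is_density_family M p \<Theta> \<longleftrightarrow>
     (\<forall>t\<in>\<Theta>. p t \<in> borel_measurable M \<and> (\<forall>x\<in>space M. 0 \<le> p t x)
              \<and> (\<integral>\<^sup>+ x. ennreal (p t x) \<partial>M) = 1)"

definition KL_finite :: "'a measure \<Rightarrow> (real \<Rightarrow> 'a \<Rightarrow> real) \<Rightarrow> real \<Rightarrow> real \<Rightarrow> bool" where
  "KL_finite M p a b \<longleftrightarrow>
     (AE x in M. 0 < p a x \<longrightarrow> 0 < p b x) \<and>
     integrable M (\<lambda>x. p a x * ln (p a x / p b x))"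

definition KL :: "'a measure \<Rightarrow> (real \<Rightarrow> 'a \<Rightarrow> real) \<Rightarrow> real \<Rightarrow> real \<Rightarrow> real" where
  "KL M p a b = (\<integral> x. p a x * ln (p a x / p b x) \<partial>M)"

definition resid :: "nat \<Rightarrow> nat \<Rightarrow> nat" where
  "resid T k = (if k mod T = 0 then T else k mod T)"

definition batch :: "nat \<Rightarrow> (nat \<Rightarrow> nat) \<Rightarrow> nat \<Rightarrow> nat \<Rightarrow> nat" where
  "batch T N E k = (THE j. j \<in> {1..E} \<and> resid T k \<in> {N (j - 1) + 1 .. N j})"

(* law of Y_k under the no-change measure P_infty; the path is \<omega> :: nat \<Rightarrow> 'a, Y_k = \<omega> k (k \<ge> 1) *)
definition P_inf :: "'a measure \<Rightarrow> (real \<Rightarrow> 'a \<Rightarrow> real) \<Rightarrow> nat \<Rightarrow> (nat \<Rightarrow> nat) \<Rightarrow> nat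
                      \<Rightarrow> (nat \<Rightarrow> real) \<Rightarrow> (nat \<Rightarrow> 'a) measure" where
  "P_inf M p T N E \<theta> = (\<Pi>\<^sub>M k\<in>UNIV. density M (p (\<theta> (batch T N E k))))"

definition P_change :: "'a measure \<Rightarrow> (real \<Rightarrow> 'a \<Rightarrow> real) \<Rightarrow> nat \<Rightarrow> (nat \<Rightarrow> nat) \<Rightarrow> nat
                      \<Rightarrow> (nat \<Rightarrow> real) \<Rightarrow> nat \<Rightarrow> nat \<Rightarrow> real \<Rightarrow> (nat \<Rightarrow> 'a) measure" where
  "P_change M p T N E \<theta> \<gamma> e lam =
     (\<Pi>\<^sub>M k\<in>UNIV. density M (p (if \<gamma> \<le> k \<and> batch T N E k = e then lam else \<theta> (batch T N E k))))"

definition Lam :: "real set \<Rightarrow> (nat \<Rightarrow> real) \<Rightarrow> real \<Rightarrow> nat \<Rightarrow> real set" where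
  "Lam \<Theta> \<theta> \<epsilon> e = {l \<in> \<Theta>. \<bar>l - \<theta> e\<bar> \<ge> \<epsilon>}"

(* W_n^e (valued in ereal so that the sup over an empty parameter set is meaningful) *)
definition Wstat :: "(real \<Rightarrow> 'a \<Rightarrow> real) \<Rightarrow> nat \<Rightarrow> (nat \<Rightarrow> nat) \<Rightarrow> nat \<Rightarrow> (nat \<Rightarrow> real)
                     \<Rightarrow> real set \<Rightarrow> nat \<Rightarrow> nat \<Rightarrow> (nat \<Rightarrow> 'a) \<Rightarrow> ereal" where
  "Wstat p T N E \<theta> \<Lambda> e n \<omega> =
     (SUP k\<in>{1..n}. SUP l\<in>\<Lambda>.
        ereal (\<Sum>i\<in>{i\<in>{k..n}. batch T N E i = e}. ln (p l (\<omega> i) / p (\<theta> e) (\<omega> i))))"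

definition tau_e :: "(real \<Rightarrow> 'a \<Rightarrow> real) \<Rightarrow> nat \<Rightarrow> (nat \<Rightarrow> nat) \<Rightarrow> nat \<Rightarrow> (nat \<Rightarrow> real)
                     \<Rightarrow> real set \<Rightarrow> real \<Rightarrow> nat \<Rightarrow> (nat \<Rightarrow> 'a) \<Rightarrow> enat" where
  "tau_e p T N E \<theta> \<Lambda> A e \<omega> =
     (if \<exists>n\<ge>1. Wstat p T N E \<theta> \<Lambda> e n \<omega> > ereal A
      then enat (LEAST n. n \<ge> 1 \<and> Wstat p T N E \<theta> \<Lambda> e n \<omega> > ereal A) else \<infinity>)"

definition tau_o :: "(real \<Rightarrow> 'a \<Rightarrow> real) \<Rightarrow> nat \<Rightarrow> (nat \<Rightarrow> nat) \<Rightarrow> nat \<Rightarrow> (nat \<Rightarrow> real)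
                     \<Rightarrow> real set \<Rightarrow> real \<Rightarrow> real \<Rightarrow> (nat \<Rightarrow> 'a) \<Rightarrow> enat" where
  "tau_o p T N E \<theta> \<Theta> \<epsilon> A \<omega> = (MIN e\<in>{1..E}. tau_e p T N E \<theta> (Lam \<Theta> \<theta> \<epsilon> e) A e \<omega>)"

end

theory Submission
  imports Defs
begin



locale cp_setup =
  fixes M :: "'a measure" and p :: "real \<Rightarrow> 'a \<Rightarrow> real" and \<Theta> :: "real set"
    and T E :: nat and N :: "nat \<Rightarrow> nat" and \<theta> :: "nat \<Rightarrow> real" and \<epsilon> :: real
  assumes dens: "is_density_family M p \<Theta>"
    and KL_fin: "\<And>a b. a \<in> \<Theta> \<Longrightarrow> b \<in> \<Theta> \<Longrightarrow> a \<noteq> b \<Longrightarrow> KL_finite M p a b \<and> KL M p a b > 0"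
    and T_pos: "T \<ge> 1"
    and N0: "N 0 = 0" and NE: "N E = T"
    and N_mono: "\<And>j. j < E \<Longrightarrow> N j < N (Suc j)"
    and theta_in: "\<And>e. e \<in> {1..E} \<Longrightarrow> \<theta> e \<in> \<Theta>"
    and eps_pos: "\<epsilon> > 0"
    and Lam_finite: "\<And>e. e \<in> {1..E} \<Longrightarrow> finite (Lam \<Theta> \<theta> \<epsilon> e)"
begin

abbreviation "b \<equiv> batch T N E"

lemma N_less: "i < j \<Longrightarrow> j \<le> E \<Longrightarrow> N i < N j"
proof (induction j)
  case 0 then show ?case by simp
next
  case (Suc j)
  then show ?case using N_mono[of j] by (cases "i = j") auto
qed

lemma N_le_mono: "i \<le> j \<Longrightarrow> j \<le> E \<Longrightarrow> N i \<le> N j"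
  using N_less[of i j] by (cases "i = j") auto

lemma E_pos: "E \<ge> 1"
  using N0 NE T_pos by (cases E) auto

lemma resid_range: "resid T k \<in> {1..T}"
  using T_pos by (auto simp: resid_def)

lemma batch_eq:
  assumes j: "j \<in> {1..E}" and r: "resid T k \<in> {N (j - 1) + 1 .. N j}"
  shows "b k = j"
  unfolding batch_def
proof (rule the_equality)
  show "j \<in> {1..E} \<and> resid T k \<in> {N (j - 1) + 1..N j}" using j r by auto
next
  fix j' assume h: "j' \<in> {1..E} \<and> resid T k \<in> {N (j' - 1) + 1..N j'}"
  show "j' = j"
  proof (rule ccontr)
    assume "j' \<noteq> j"
    then consider "j' < j" | "j < j'" by linarith
    then show False
    proof cases
      case 1
      then have "N j' \<le> N (j - 1)" using j by (intro N_le_mono) auto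
      then show False using h r by auto
    next
      case 2
      then have "N j \<le> N (j' - 1)" using h by (intro N_le_mono) auto
      then show False using h r by auto
    qed
  qed
qed

lemma batch_ex: "\<exists>j\<in>{1..E}. resid T k \<in> {N (j - 1) + 1 .. N j}"
proof -
  define r where "r = resid T k"
  have r: "1 \<le> r" "r \<le> T" using resid_range[of k] by (auto simp: r_def)
  have ex: "\<exists>j. r \<le> N j \<and> j \<le> E" using NE r by auto
  define j where "j = (LEAST j. r \<le> N j \<and> j \<le> E)"
  have j1: "r \<le> N j \<and> j \<le> E" using LeastI_ex[OF ex] by (simp add: j_def)
  have j0: "j \<noteq> 0" using j1 N0 r by (cases j) auto
  have "\<not> (r \<le> N (j - 1) \<and> j - 1 \<le> E)"
    using j0 by (metis (no_types, lifting) Least_le diff_less j_def less_numeral_extra(1) not_le neq0_conv)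
  then have "N (j - 1) < r" using j1 by auto
  then show ?thesis using j1 j0 unfolding r_def by (intro bexI[of _ j]) auto
qed

lemma batch_in: "b k \<in> {1..E}"
  using batch_ex[of k] batch_eq by metis

lemma N_pos: "e \<in> {1..E} \<Longrightarrow> 1 \<le> N e"
  using N_less[of 0 e] N0 by auto

lemma N_leT: "e \<le> E \<Longrightarrow> N e \<le> T"
  using N_le_mono[of e E] NE by auto

lemma batch_special:
  assumes e: "e \<in> {1..E}"
  shows "b (q * T + N e) = e"
proof (rule batch_eq[OF e])
  have "resid T (q * T + N e) = N e"
  proof (cases "N e = T")
    case True then show ?thesis by (simp add: resid_def)
  next
    case False
    then have "N e < T" using N_leT[of e] e by auto
    then show ?thesis using N_pos[OF e] by (simp add: resid_def)
  qed
  then show "resid T (q * T + N e) \<in> {N (e - 1) + 1..N e}"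
    using N_less[of "e - 1" e] e by auto
qed

end



locale nat_pps = product_prob_space M "UNIV :: nat set" for M :: "nat \<Rightarrow> 'a measure"

lemma (in nat_pps) indep_coords:
  shows "prob_space.indep_vars (PiM UNIV M) M (\<lambda>i \<omega>. \<omega> i) UNIV"
proof -
  have "prob_space.indep_vars (PiM UNIV M) M (\<lambda>i \<omega>. \<omega> i) UNIV \<longleftrightarrow>
      distr (PiM UNIV M) (\<Pi>\<^sub>M i\<in>UNIV. M i) (\<lambda>x. \<lambda>i\<in>UNIV. x i) = (\<Pi>\<^sub>M i\<in>UNIV. distr (PiM UNIV M) (M i) (\<lambda>x. x i))"
    by (rule P.indep_vars_iff_distr_eq_PiM') auto
  moreover have "(\<Pi>\<^sub>M i\<in>UNIV. distr (PiM UNIV M) (M i) (\<lambda>x. x i)) = (\<Pi>\<^sub>M i\<in>UNIV. M i)"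
    by (rule PiM_cong) (auto simp: PiM_component)
  moreover have "distr (PiM UNIV M) (\<Pi>\<^sub>M i\<in>UNIV. M i) (\<lambda>x. \<lambda>i\<in>UNIV. x i) = PiM UNIV M"
  proof -
    have "distr (PiM UNIV M) (\<Pi>\<^sub>M i\<in>UNIV. M i) (\<lambda>x. \<lambda>i\<in>UNIV. x i) = distr (PiM UNIV M) (\<Pi>\<^sub>M i\<in>UNIV. M i) (\<lambda>x. x)"
      by (rule distr_cong) auto
    also have "\<dots> = PiM UNIV M" by (rule distr_id)
    finally show ?thesis .
  qed
  ultimately show ?thesis by simp
qed

lemma (in nat_pps) nn_integral_indep_mult:
  assumes i: "i \<notin> J"
    and f[measurable]: "f \<in> borel_measurable (PiM J M)" and g[measurable]: "g \<in> borel_measurable (M i)"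
  shows "(\<integral>\<^sup>+\<omega>. f (restrict \<omega> J) * g (\<omega> i) \<partial>PiM UNIV M) =
         (\<integral>\<^sup>+\<omega>. f (restrict \<omega> J) \<partial>PiM UNIV M) * (\<integral>\<^sup>+\<omega>. g (\<omega> i) \<partial>PiM UNIV M)"
proof -
  have r: "prob_space.indep_var (PiM UNIV M) (PiM J M) (\<lambda>\<omega>. restrict (\<lambda>i. \<omega> i) J) (PiM {i} M) (\<lambda>\<omega>. restrict (\<lambda>i. \<omega> i) {i})"
    by (rule P.indep_var_restrict[OF indep_coords]) (use i in auto)
  have "prob_space.indep_var (PiM UNIV M) borel (f \<circ> (\<lambda>\<omega>. restrict \<omega> J)) borel ((\<lambda>x. g (x i)) \<circ> (\<lambda>\<omega>. restrict \<omega> {i}))"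
    using P.indep_var_compose[OF r f, of "\<lambda>x. g (x i)" borel] by simp
  then have ind: "prob_space.indep_vars (PiM UNIV M) (\<lambda>_. borel)
      (case_bool (f \<circ> (\<lambda>\<omega>. restrict \<omega> J)) ((\<lambda>x. g (x i)) \<circ> (\<lambda>\<omega>. restrict \<omega> {i}))) UNIV"
    unfolding P.indep_var_def
    by (rule P.indep_vars_cong[THEN iffD1, rotated 3]) (auto split: bool.split)
  have "(\<integral>\<^sup>+\<omega>. (\<Prod>b\<in>UNIV. case_bool (f \<circ> (\<lambda>\<omega>. restrict \<omega> J)) ((\<lambda>x. g (x i)) \<circ> (\<lambda>\<omega>. restrict \<omega> {i})) b \<omega>) \<partial>PiM UNIV M)
     = (\<Prod>b\<in>UNIV. \<integral>\<^sup>+\<omega>. case_bool (f \<circ> (\<lambda>\<omega>. restrict \<omega> J)) ((\<lambda>x. g (x i)) \<circ> (\<lambda>\<omega>. restrict \<omega> {i})) b \<omega> \<partial>PiM UNIV M)"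
    by (rule P.indep_vars_nn_integral[OF _ ind]) auto
  then show ?thesis by (simp add: UNIV_bool comp_def mult.commute)
qed




lemma (in nat_pps) nn_integral_coord:
  assumes [measurable]: "g \<in> borel_measurable (M i)"
  shows "(\<integral>\<^sup>+\<omega>. g (\<omega> i) \<partial>PiM UNIV M) = (\<integral>\<^sup>+y. g y \<partial>M i)"
proof -
  have "(\<integral>\<^sup>+y. g y \<partial>M i) = (\<integral>\<^sup>+y. g y \<partial>distr (PiM UNIV M) (M i) (\<lambda>\<omega>. \<omega> i))"
    by (simp add: PiM_component)
  also have "\<dots> = (\<integral>\<^sup>+\<omega>. g (\<omega> i) \<partial>PiM UNIV M)"
    by (rule nn_integral_distr) auto
  finally show ?thesis ..
qed

lemma (in nat_pps) ville:
  fixes w :: "nat \<Rightarrow> 'a \<Rightarrow> ennreal"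
  assumes w[measurable]: "\<And>i. w i \<in> borel_measurable (M i)" and w1: "\<And>i. (\<integral>\<^sup>+y. w i y \<partial>M i) \<le> 1"
    and a: "0 < a"
  shows "a * emeasure (PiM UNIV M) {\<omega>\<in>space (PiM UNIV M). \<exists>m\<in>{..n}. a < (\<Prod>i<m. w i (\<omega> i))} \<le> 1"
    and "{\<omega>\<in>space (PiM UNIV M). \<exists>m\<in>{..n}. a < (\<Prod>i<m. w i (\<omega> i))} \<in> sets (PiM UNIV M)"
proof -
  define P where "P m \<omega> = (\<Prod>i<m. w i (\<omega> i))" for m and \<omega> :: "nat \<Rightarrow> 'a"
  define D where "D n \<omega> = (\<exists>m\<in>{..n}. a < P m \<omega>)" for n \<omega>
  define V where "V n \<omega> = (if D n \<omega> then a else P n \<omega>)" for n \<omega>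
  have Pm[measurable]: "\<And>m J. {..<m} \<subseteq> J \<Longrightarrow> P m \<in> borel_measurable (PiM J M)"
    unfolding P_def by measurable auto
  have Dm[measurable]: "\<And>n J. {..<n} \<subseteq> J \<Longrightarrow> Measurable.pred (PiM J M) (D n)"
    unfolding D_def
    by (rule pred_intros_finite(4)) (auto intro!: Pm borel_measurable_pred_less)
  have Vm[measurable]: "V n \<in> borel_measurable (PiM UNIV M)" for n
    unfolding V_def by (intro measurable_If Pm Dm) auto
  have Prestr: "P m (restrict \<omega> {..<n}) = P m \<omega>" if "m \<le> n" for m n \<omega>
    using that unfolding P_def by (intro prod.cong) auto
  have Drestr: "D n (restrict \<omega> {..<n}) = D n \<omega>" for n \<omega>
    unfolding D_def using Prestr by auto
  have step: "(\<integral>\<^sup>+\<omega>. V (Suc n) \<omega> \<partial>PiM UNIV M) \<le> (\<integral>\<^sup>+\<omega>. V n \<omega> \<partial>PiM UNIV M)" for n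
  proof -
    define f where "f x = (if D n x then 0 else P n x)" for x
    have fm[measurable]: "f \<in> borel_measurable (PiM {..<n} M)"
      unfolding f_def by (intro measurable_If Pm Dm) auto
    define F where "F \<omega> = (if D n \<omega> then a else 0)" for \<omega>
    have Fm[measurable]: "F \<in> borel_measurable (PiM UNIV M)"
      unfolding F_def by (intro measurable_If Dm) auto
    have Geq: "f (restrict \<omega> {..<n}) = (if D n \<omega> then 0 else P n \<omega>)" for \<omega>
      unfolding f_def using Drestr Prestr by auto
    have pt: "V (Suc n) \<omega> \<le> F \<omega> + f (restrict \<omega> {..<n}) * w n (\<omega> n)" for \<omega>
    proof -
      have PS: "P (Suc n) \<omega> = P n \<omega> * w n (\<omega> n)" unfolding P_def by simp
      have DS: "D (Suc n) \<omega> = (D n \<omega> \<or> a < P (Suc n) \<omega>)"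
        unfolding D_def by (auto simp: le_Suc_eq)
      show ?thesis
        unfolding V_def Geq F_def DS PS by (auto intro: less_imp_le)
    qed
    have "(\<integral>\<^sup>+\<omega>. V (Suc n) \<omega> \<partial>PiM UNIV M) \<le> (\<integral>\<^sup>+\<omega>. F \<omega> + f (restrict \<omega> {..<n}) * w n (\<omega> n) \<partial>PiM UNIV M)"
      by (intro nn_integral_mono pt)
    also have "\<dots> = (\<integral>\<^sup>+\<omega>. F \<omega> \<partial>PiM UNIV M) + (\<integral>\<^sup>+\<omega>. f (restrict \<omega> {..<n}) * w n (\<omega> n) \<partial>PiM UNIV M)"
      by (rule nn_integral_add) auto
    also have "(\<integral>\<^sup>+\<omega>. f (restrict \<omega> {..<n}) * w n (\<omega> n) \<partial>PiM UNIV M)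
        = (\<integral>\<^sup>+\<omega>. f (restrict \<omega> {..<n}) \<partial>PiM UNIV M) * (\<integral>\<^sup>+\<omega>. w n (\<omega> n) \<partial>PiM UNIV M)"
      by (rule nn_integral_indep_mult) auto
    also have "\<dots> \<le> (\<integral>\<^sup>+\<omega>. f (restrict \<omega> {..<n}) \<partial>PiM UNIV M) * 1"
      using w1[of n] by (intro mult_left_mono) (auto simp: nn_integral_coord)
    also have "(\<integral>\<^sup>+\<omega>. F \<omega> \<partial>PiM UNIV M) + (\<integral>\<^sup>+\<omega>. f (restrict \<omega> {..<n}) \<partial>PiM UNIV M) * 1
        = (\<integral>\<^sup>+\<omega>. F \<omega> + f (restrict \<omega> {..<n}) \<partial>PiM UNIV M)"
      by (simp, rule nn_integral_add[symmetric]) auto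
    also have "\<dots> = (\<integral>\<^sup>+\<omega>. V n \<omega> \<partial>PiM UNIV M)"
      by (intro nn_integral_cong) (auto simp: Geq F_def V_def)
    finally show ?thesis by (simp add: add_left_mono)
  qed
  have bound: "(\<integral>\<^sup>+\<omega>. V n \<omega> \<partial>PiM UNIV M) \<le> 1" for n
  proof (induction n)
    case 0
    have "(\<integral>\<^sup>+\<omega>. V 0 \<omega> \<partial>PiM UNIV M) \<le> (\<integral>\<^sup>+\<omega>. 1 \<partial>PiM UNIV M)"
      by (intro nn_integral_mono) (auto simp: V_def D_def P_def)
    then show ?case by (simp add: P.emeasure_space_1)
  next
    case (Suc n) then show ?case using step[of n] by order
  qed
  have "a * emeasure (PiM UNIV M) {\<omega>\<in>space (PiM UNIV M). D n \<omega>} = (\<integral>\<^sup>+\<omega>. a * indicator {\<omega>\<in>space (PiM UNIV M). D n \<omega>} \<omega> \<partial>PiM UNIV M)"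
    by (subst nn_integral_cmult_indicator) auto
  also have "\<dots> \<le> (\<integral>\<^sup>+\<omega>. V n \<omega> \<partial>PiM UNIV M)"
    by (intro nn_integral_mono) (auto simp: V_def indicator_def)
  finally show "a * emeasure (PiM UNIV M) {\<omega>\<in>space (PiM UNIV M). \<exists>m\<in>{..n}. a < (\<Prod>i<m. w i (\<omega> i))} \<le> 1"
    using bound[of n] unfolding D_def P_def by order
  show "{\<omega>\<in>space (PiM UNIV M). \<exists>m\<in>{..n}. a < (\<Prod>i<m. w i (\<omega> i))} \<in> sets (PiM UNIV M)"
    using Dm[of n UNIV] unfolding D_def P_def pred_def by simp
qed

lemma (in nat_pps) indep_blocks:
  fixes K :: "nat \<Rightarrow> nat set" and j :: nat
  assumes K: "disjoint_family K" and A: "\<And>i. A i \<in> sets (PiM (K i) M)" and j: "j \<noteq> 0"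
  shows "measure (PiM UNIV M) (\<Inter>i<j. {\<omega>\<in>space (PiM UNIV M). restrict \<omega> (K i) \<in> A i})
       = (\<Prod>i<j. measure (PiM UNIV M) {\<omega>\<in>space (PiM UNIV M). restrict \<omega> (K i) \<in> A i})"
proof -
  have ind: "prob_space.indep_vars (PiM UNIV M) (\<lambda>i. PiM (K i) M) (\<lambda>i \<omega>. restrict (\<lambda>t. \<omega> t) (K i)) UNIV"
    by (rule P.indep_vars_restrict[OF indep_coords]) (use K in \<open>auto simp: disjoint_family_on_def\<close>)
  have "measure (PiM UNIV M) (\<Inter>i\<in>{..<j}. (\<lambda>\<omega>. restrict (\<lambda>t. \<omega> t) (K i)) -` A i \<inter> space (PiM UNIV M))
     = (\<Prod>i\<in>{..<j}. measure (PiM UNIV M) ((\<lambda>\<omega>. restrict (\<lambda>t. \<omega> t) (K i)) -` A i \<inter> space (PiM UNIV M)))"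
    by (rule P.indep_varsD[OF ind]) (use j A in \<open>auto simp: lessThan_empty_iff\<close>)
  moreover have "\<And>i. (\<lambda>\<omega>. restrict (\<lambda>t. \<omega> t) (K i)) -` A i \<inter> space (PiM UNIV M) = {\<omega>\<in>space (PiM UNIV M). restrict \<omega> (K i) \<in> A i}"
    by auto
  ultimately show ?thesis by simp
qed




context cp_setup begin

lemma p_meas[measurable]: "t \<in> \<Theta> \<Longrightarrow> p t \<in> borel_measurable M"
  using dens by (auto simp: is_density_family_def)
lemma p_nonneg: "t \<in> \<Theta> \<Longrightarrow> x \<in> space M \<Longrightarrow> 0 \<le> p t x"
  using dens by (auto simp: is_density_family_def)
lemma p_int1: "t \<in> \<Theta> \<Longrightarrow> (\<integral>\<^sup>+ x. ennreal (p t x) \<partial>M) = 1"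
  using dens by (auto simp: is_density_family_def)

lemma prob_dens: assumes t: "t \<in> \<Theta>" shows "prob_space (density M (p t))"
proof (rule prob_spaceI)
  have "emeasure (density M (p t)) (space (density M (p t))) = (\<integral>\<^sup>+ x. ennreal (p t x) * indicator (space M) x \<partial>M)"
    using t by (simp add: emeasure_density)
  also have "\<dots> = (\<integral>\<^sup>+ x. ennreal (p t x) \<partial>M)"
    by (intro nn_integral_cong) auto
  finally show "emeasure (density M (p t)) (space (density M (p t))) = 1" using p_int1[OF t] by simp
qed

lemma pps: assumes "\<And>k. par k \<in> \<Theta>" shows "nat_pps (\<lambda>k. density M (p (par k)))"
proof -
  interpret pr: prob_space "density M (p (par k))" for k using prob_dens assms by auto
  show ?thesis
    unfolding nat_pps_def product_prob_space_def product_prob_space_axioms_def product_sigma_finite_def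
    by (auto intro: pr.prob_space_axioms pr.sigma_finite_measure)
qed

lemma theta_b: "\<theta> (b k) \<in> \<Theta>" using theta_in batch_in by auto

lemma Lam_sub: "Lam \<Theta> \<theta> \<epsilon> e \<subseteq> \<Theta>" by (auto simp: Lam_def)
lemma Lam_ne: "l \<in> Lam \<Theta> \<theta> \<epsilon> e \<Longrightarrow> l \<noteq> \<theta> e" using eps_pos by (auto simp: Lam_def)

definition Ssum :: "nat \<Rightarrow> real \<Rightarrow> nat \<Rightarrow> nat \<Rightarrow> (nat \<Rightarrow> 'a) \<Rightarrow> real" where
  "Ssum e l k m \<omega> = (\<Sum>i\<in>{i\<in>{k..m}. b i = e}. ln (p l (\<omega> i) / p (\<theta> e) (\<omega> i)))"

lemma tau_le_imp:
  assumes "tau_o p T N E \<theta> \<Theta> \<epsilon> A \<omega> \<le> enat n"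
  shows "\<exists>e\<in>{1..E}. \<exists>l\<in>Lam \<Theta> \<theta> \<epsilon> e. \<exists>k\<in>{1..n}. \<exists>m\<in>{k..n}. A < Ssum e l k m \<omega>"
proof -
  have ne: "{1..E} \<noteq> {}" using E_pos by auto
  obtain e where e: "e \<in> {1..E}" and te: "tau_e p T N E \<theta> (Lam \<Theta> \<theta> \<epsilon> e) A e \<omega> \<le> enat n"
    using assms ne unfolding tau_o_def by (auto simp: Min_le_iff)
  let ?W = "\<lambda>n. Wstat p T N E \<theta> (Lam \<Theta> \<theta> \<epsilon> e) e n \<omega>"
  have ex: "\<exists>n\<ge>1. ?W n > ereal A"
    using te unfolding tau_e_def by (auto split: if_splits)
  define m where "m = (LEAST n. n \<ge> 1 \<and> ?W n > ereal A)"
  have m: "m \<ge> 1 \<and> ?W m > ereal A" unfolding m_def by (rule LeastI_ex) (use ex in auto)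
  have mn: "m \<le> n" using te ex unfolding tau_e_def m_def by auto
  from m have "ereal A < (SUP k\<in>{1..m}. SUP l\<in>Lam \<Theta> \<theta> \<epsilon> e. ereal (Ssum e l k m \<omega>))"
    by (simp add: Wstat_def Ssum_def)
  then obtain k l where k: "k \<in> {1..m}" and l: "l \<in> Lam \<Theta> \<theta> \<epsilon> e" and A: "ereal A < ereal (Ssum e l k m \<omega>)"
    by (auto simp: less_SUP_iff)
  show ?thesis using e l k A mn by (intro bexI[of _ e] bexI[of _ l] bexI[of _ k] bexI[of _ m]) auto
qed

end



context cp_setup begin

definition wf :: "nat \<Rightarrow> real \<Rightarrow> nat \<Rightarrow> nat \<Rightarrow> 'a \<Rightarrow> ennreal" where
  "wf e l k i y = (if k \<le> i \<and> b i = e then ennreal (exp (ln (p l y / p (\<theta> e) y))) else 1)"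

lemma wf_prod: "(\<Prod>i<Suc m. wf e l k i (\<omega> i)) = ennreal (exp (Ssum e l k m \<omega>))"
proof -
  have "(\<Prod>i<Suc m. wf e l k i (\<omega> i)) = (\<Prod>i\<in>{i\<in>{..<Suc m}. k \<le> i \<and> b i = e}. ennreal (exp (ln (p l (\<omega> i) / p (\<theta> e) (\<omega> i)))))"
    unfolding wf_def by (subst prod.inter_filter) auto
  also have "{i\<in>{..<Suc m}. k \<le> i \<and> b i = e} = {i\<in>{k..m}. b i = e}" by auto
  also have "(\<Prod>i\<in>{i\<in>{k..m}. b i = e}. ennreal (exp (ln (p l (\<omega> i) / p (\<theta> e) (\<omega> i)))))
      = ennreal (\<Prod>i\<in>{i\<in>{k..m}. b i = e}. exp (ln (p l (\<omega> i) / p (\<theta> e) (\<omega> i))))"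
    by (rule prod_ennreal) auto
  also have "\<dots> = ennreal (exp (Ssum e l k m \<omega>))"
    unfolding Ssum_def by (simp add: exp_sum)
  finally show ?thesis .
qed

lemma LR_int_le1:
  assumes l: "l \<in> \<Theta>" and t: "t \<in> \<Theta>" and lt: "l \<noteq> t"
  shows "(\<integral>\<^sup>+y. ennreal (exp (ln (p l y / p t y))) \<partial>density M (p t)) \<le> 1"
proof -
  have AE: "AE x in M. 0 < p t x \<longrightarrow> 0 < p l x"
    using KL_fin[OF t l] lt by (auto simp: KL_finite_def)
  have "(\<integral>\<^sup>+y. ennreal (exp (ln (p l y / p t y))) \<partial>density M (p t))
      = (\<integral>\<^sup>+y. ennreal (p t y) * ennreal (exp (ln (p l y / p t y))) \<partial>M)"
    using l t by (subst nn_integral_density) auto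
  also have "\<dots> \<le> (\<integral>\<^sup>+y. ennreal (p l y) \<partial>M)"
  proof (rule nn_integral_mono_AE)
    show "AE x in M. ennreal (p t x) * ennreal (exp (ln (p l x / p t x))) \<le> ennreal (p l x)"
      using AE
    proof (rule AE_mp, intro AE_I2 impI)
      fix x assume x: "x \<in> space M" and h: "0 < p t x \<longrightarrow> 0 < p l x"
      have nl: "0 \<le> p l x" and nt: "0 \<le> p t x" using p_nonneg l t x by auto
      show "ennreal (p t x) * ennreal (exp (ln (p l x / p t x))) \<le> ennreal (p l x)"
      proof (cases "p t x = 0")
        case True then show ?thesis by simp
      next
        case False
        then have "0 < p t x" "0 < p l x" using nt h by auto
        then show ?thesis by (simp add: ennreal_mult[symmetric])
      qed
    qed
  qed
  also have "\<dots> = 1" using p_int1[OF l] .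
  finally show ?thesis .
qed

lemma ARL_bound:
  fixes A :: real and n :: nat
  defines "LL \<equiv> (\<Union>e\<in>{1..E}. Lam \<Theta> \<theta> \<epsilon> e)"
  shows "(\<integral>\<^sup>+ \<omega>. ennreal_of_enat (tau_o p T N E \<theta> \<Theta> \<epsilon> A \<omega>) \<partial>(P_inf M p T N E \<theta>))
     \<ge> ennreal (real n * (1 - real n * real (E * card LL) * exp (- A)))"
proof -
  let ?\<mu> = "\<lambda>k. density M (p (\<theta> (b k)))"
  interpret Q: nat_pps ?\<mu> by (rule pps) (rule theta_b)
  have Qdef: "P_inf M p T N E \<theta> = PiM UNIV ?\<mu>" by (simp add: P_inf_def)
  define I3 where "I3 = {(e, l, k). e \<in> {1..E} \<and> l \<in> Lam \<Theta> \<theta> \<epsilon> e \<and> k \<in> {1..n}}"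
  define VS where "VS = (\<lambda>(e, l, k). {\<omega>\<in>space (PiM UNIV ?\<mu>). \<exists>m\<in>{..Suc n}. ennreal (exp A) < (\<Prod>i<m. wf e l k i (\<omega> i))})"
  have fin_LL: "finite LL" unfolding LL_def using Lam_finite by auto
  have I3_sub: "I3 \<subseteq> {1..E} \<times> LL \<times> {1..n}" unfolding I3_def LL_def by auto
  have fin_I3: "finite I3" using I3_sub fin_LL by (meson finite_SigmaI finite_atLeastAtMost finite_subset)
  have card_I3: "card I3 \<le> E * card LL * n"
    using card_mono[OF _ I3_sub] fin_LL by (simp add: card_cartesian_product)
  have VS: "VS t \<in> sets (PiM UNIV ?\<mu>) \<and> measure (PiM UNIV ?\<mu>) (VS t) \<le> exp (- A)" if t: "t \<in> I3" for t
  proof -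
    obtain e l k where teq: "t = (e, l, k)" and e: "e \<in> {1..E}" and l: "l \<in> Lam \<Theta> \<theta> \<epsilon> e"
      using t unfolding I3_def by auto
    have lT: "l \<in> \<Theta>" using l Lam_sub by auto
    have ne: "l \<noteq> \<theta> e" using Lam_ne[OF l] .
    have wm: "wf e l k i \<in> borel_measurable (?\<mu> i)" for i
      unfolding wf_def using lT theta_in[OF e] by (auto simp: measurable_cong_sets[OF sets_density refl])
    have w1: "(\<integral>\<^sup>+y. wf e l k i y \<partial>?\<mu> i) \<le> 1" for i
    proof (cases "k \<le> i \<and> b i = e")
      case True
      then show ?thesis unfolding wf_def using LR_int_le1[OF lT theta_in[OF e] ne] by simp
    next
      case False
      then have "wf e l k i = (\<lambda>_. 1)" unfolding wf_def by auto
      then show ?thesis using Q.M.emeasure_space_1[of i] by simp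
    qed
    have a: "(0::ennreal) < ennreal (exp A)" by simp
    note V = Q.ville[OF wm w1 a, of "Suc n"]
    have m: "VS t \<in> sets (PiM UNIV ?\<mu>)" using V(2) unfolding teq VS_def by simp
    have "ennreal (exp A) * ennreal (measure (PiM UNIV ?\<mu>) (VS t)) \<le> 1"
      using V(1) unfolding teq VS_def by (simp add: Q.P.emeasure_eq_measure)
    then have "exp A * measure (PiM UNIV ?\<mu>) (VS t) \<le> 1"
      by (simp add: ennreal_mult[symmetric])
    then have "measure (PiM UNIV ?\<mu>) (VS t) \<le> exp (- A)"
      by (simp add: exp_minus field_simps)
    with m show ?thesis by simp
  qed
  define Bad where "Bad = (\<Union>t\<in>I3. VS t)"
  have Bad_m: "Bad \<in> sets (PiM UNIV ?\<mu>)" unfolding Bad_def using VS fin_I3 by auto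
  have "measure (PiM UNIV ?\<mu>) Bad \<le> (\<Sum>t\<in>I3. measure (PiM UNIV ?\<mu>) (VS t))"
    unfolding Bad_def using VS fin_I3 by (intro measure_UNION_le) auto
  also have "\<dots> \<le> (\<Sum>t\<in>I3. exp (- A))" using VS by (intro sum_mono) auto
  also have "\<dots> = real (card I3) * exp (- A)" by simp
  also have "\<dots> \<le> real n * real (E * card LL) * exp (- A)"
    using card_I3 by (intro mult_right_mono) (auto simp: mult.commute simp flip: of_nat_mult)
  finally have Bad_le: "measure (PiM UNIV ?\<mu>) Bad \<le> real n * real (E * card LL) * exp (- A)" .
  define G where "G = space (PiM UNIV ?\<mu>) - Bad"
  have G_m: "G \<in> sets (PiM UNIV ?\<mu>)" unfolding G_def using Bad_m by auto
  have pG: "measure (PiM UNIV ?\<mu>) G = 1 - measure (PiM UNIV ?\<mu>) Bad"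
    unfolding G_def using Q.P.prob_compl[OF Bad_m] by simp
  have pt: "of_nat n * indicator G \<omega> \<le> ennreal_of_enat (tau_o p T N E \<theta> \<Theta> \<epsilon> A \<omega>)"
    if \<omega>: "\<omega> \<in> space (PiM UNIV ?\<mu>)" for \<omega>
  proof (cases "\<omega> \<in> G")
    case True
    have "\<not> tau_o p T N E \<theta> \<Theta> \<epsilon> A \<omega> \<le> enat n"
    proof
      assume "tau_o p T N E \<theta> \<Theta> \<epsilon> A \<omega> \<le> enat n"
      from tau_le_imp[OF this] obtain e l k m where e: "e \<in> {1..E}" and l: "l \<in> Lam \<Theta> \<theta> \<epsilon> e"
        and k: "k \<in> {1..n}" and m: "m \<in> {k..n}" and A: "A < Ssum e l k m \<omega>" by blast
      have "ennreal (exp A) < (\<Prod>i<Suc m. wf e l k i (\<omega> i))"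
        using A by (simp only: wf_prod) (simp add: ennreal_lessI)
      then have "\<omega> \<in> VS (e, l, k)" unfolding VS_def using \<omega> m by (auto intro!: bexI[of _ "Suc m"])
      moreover have "(e, l, k) \<in> I3" unfolding I3_def using e l k by auto
      ultimately show False using True unfolding G_def Bad_def by auto
    qed
    then have "enat n \<le> tau_o p T N E \<theta> \<Theta> \<epsilon> A \<omega>" by auto
    then have "ennreal_of_enat (enat n) \<le> ennreal_of_enat (tau_o p T N E \<theta> \<Theta> \<epsilon> A \<omega>)"
      by (simp only: ennreal_of_enat_le_iff)
    then show ?thesis using True by simp
  next
    case False then show ?thesis by simp
  qed
  have "ennreal (real n * (1 - real n * real (E * card LL) * exp (- A)))
      \<le> ennreal (real n * measure (PiM UNIV ?\<mu>) G)"
    using Bad_le pG by (intro ennreal_leI mult_left_mono) auto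
  also have "\<dots> = of_nat n * emeasure (PiM UNIV ?\<mu>) G"
    by (simp add: Q.P.emeasure_eq_measure ennreal_mult ennreal_of_nat_eq_real_of_nat)
  also have "\<dots> = (\<integral>\<^sup>+ \<omega>. of_nat n * indicator G \<omega> \<partial>PiM UNIV ?\<mu>)"
    using G_m by (simp add: nn_integral_cmult_indicator)
  also have "\<dots> \<le> (\<integral>\<^sup>+ \<omega>. ennreal_of_enat (tau_o p T N E \<theta> \<Theta> \<epsilon> A \<omega>) \<partial>PiM UNIV ?\<mu>)"
    by (intro nn_integral_mono pt)
  finally show ?thesis unfolding Qdef .
qed

end



lemma (in nat_pps) integral_coord:
  fixes g :: "'a \<Rightarrow> real"
  assumes [measurable]: "g \<in> borel_measurable (M i)"
  shows "(\<integral>\<omega>. g (\<omega> i) \<partial>PiM UNIV M) = (\<integral>y. g y \<partial>M i)"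
    and "integrable (M i) g \<Longrightarrow> integrable (PiM UNIV M) (\<lambda>\<omega>. g (\<omega> i))"
proof -
  show "(\<integral>\<omega>. g (\<omega> i) \<partial>PiM UNIV M) = (\<integral>y. g y \<partial>M i)"
    using integral_distr[of "\<lambda>\<omega>. \<omega> i" "PiM UNIV M" "M i" g] by (simp add: PiM_component)
  assume "integrable (M i) g"
  then show "integrable (PiM UNIV M) (\<lambda>\<omega>. g (\<omega> i))"
    using integrable_distr_eq[of "\<lambda>\<omega>. \<omega> i" "PiM UNIV M" "M i" g] by (simp add: PiM_component)
qed

context cp_setup begin

lemma trunc_exists:
  assumes e: "e \<in> {1..E}" and lam: "lam \<in> Lam \<Theta> \<theta> \<epsilon> e"
  shows "\<exists>K \<mu>. 0 < K \<and> 0 < \<mu> \<and> \<mu> \<le> K \<and>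
    integrable (density M (p lam)) (\<lambda>y. min (ln (p lam y / p (\<theta> e) y)) K) \<and>
    (\<integral>y. min (ln (p lam y / p (\<theta> e) y)) K \<partial>density M (p lam)) = \<mu>"
proof -
  have lT: "lam \<in> \<Theta>" using lam Lam_sub by auto
  have tT: "\<theta> e \<in> \<Theta>" using theta_in[OF e] .
  have ne: "lam \<noteq> \<theta> e" using Lam_ne[OF lam] .
  define X where "X y = ln (p lam y / p (\<theta> e) y)" for y
  have Xm[measurable]: "X \<in> borel_measurable (density M (p lam))"
    unfolding X_def using lT tT by (auto simp: measurable_cong_sets[OF sets_density refl])
  have Xm': "X \<in> borel_measurable M" unfolding X_def using lT tT by auto
  have KLf: "integrable M (\<lambda>x. p lam x * X x)" and KLpos: "0 < (\<integral>x. p lam x * X x \<partial>M)"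
    using KL_fin[OF lT tT ne] by (auto simp: KL_finite_def KL_def X_def)
  have intX: "integrable (density M (p lam)) X"
    using KLf lT Xm' p_nonneg[OF lT] by (subst integrable_density) (auto)
  have EX: "(\<integral>y. X y \<partial>density M (p lam)) = (\<integral>x. p lam x * X x \<partial>M)"
    using lT Xm' p_nonneg[OF lT] by (subst integral_density) auto
  define s where "s j y = min (X y) (real j)" for j :: nat and y
  have sm: "s j \<in> borel_measurable (density M (p lam))" for j unfolding s_def by measurable
  have lim: "AE y in density M (p lam). (\<lambda>j. s j y) \<longlonglongrightarrow> X y"
  proof (rule AE_I2)
    fix y
    have "eventually (\<lambda>j. s j y = X y) sequentially"
    proof -
      obtain j0 :: nat where "X y \<le> real j0" using real_arch_simple by blast
      then show ?thesis unfolding s_def eventually_sequentially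
        by (intro exI[of _ j0]) (auto simp: min_def)
    qed
    then show "(\<lambda>j. s j y) \<longlonglongrightarrow> X y" by (rule tendsto_eventually)
  qed
  have bound: "AE y in density M (p lam). norm (s j y) \<le> norm (X y)" for j
  proof (rule AE_I2)
    fix y
    show "norm (s j y) \<le> norm (X y)" unfolding s_def by (auto simp: min_def)
  qed
  have intn: "integrable (density M (p lam)) (\<lambda>y. norm (X y))" using intX by auto
  note DC = integrable_dominated_convergence2[OF Xm sm intn lim bound]
    integral_dominated_convergence[OF Xm sm intn lim bound]
  have "eventually (\<lambda>j. 0 < (\<integral>y. s j y \<partial>density M (p lam))) sequentially"
    using DC(2) KLpos EX by (auto intro: order_tendstoD)
  then obtain j where j: "0 < (\<integral>y. s j y \<partial>density M (p lam))" and j1: "j \<ge> 1"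
    by (metis eventually_sequentially le_cases order.refl)
  interpret pr: prob_space "density M (p lam)" using prob_dens[OF lT] .
  have le: "(\<integral>y. s j y \<partial>density M (p lam)) \<le> (\<integral>y. real j \<partial>density M (p lam))"
    using DC(1)[of j] by (intro integral_mono) (auto simp: s_def)
  have sp: "measure (density M (p lam)) (space M) = 1" using pr.prob_space by simp
  show ?thesis
    using j j1 le DC(1)[of j] sp
    by (intro exI[of _ "real j"] exI[of _ "\<integral>y. s j y \<partial>density M (p lam)"]) (auto simp: s_def X_def)
qed

end



context cp_setup begin

lemma sets_Q: "sets (PiM J (\<lambda>k. density M (p (par k)))) = sets (PiM J (\<lambda>_. M))"
  by (rule sets_PiM_cong) auto

lemma block_prob:
  fixes par :: "nat \<Rightarrow> real" and I :: "nat set"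
  assumes par: "\<And>k. par k \<in> \<Theta>" and lT: "lam \<in> \<Theta>" and tT: "t0 \<in> \<Theta>"
    and I: "finite I" "I \<noteq> {}" and parI: "\<And>t. t \<in> I \<Longrightarrow> par t = lam"
    and K: "0 < K" and mu: "0 < \<mu>" "\<mu> \<le> K"
    and intZ: "integrable (density M (p lam)) (\<lambda>y. min (ln (p lam y / p t0 y)) K)"
    and EZ: "(\<integral>y. min (ln (p lam y / p t0 y)) K \<partial>density M (p lam)) = \<mu>"
    and A: "A \<le> real (card I) * \<mu> / 2"
  shows "measure (PiM UNIV (\<lambda>k. density M (p (par k))))
     {\<omega>\<in>space (PiM UNIV (\<lambda>k. density M (p (par k)))). (\<Sum>t\<in>I. ln (p lam (\<omega> t) / p t0 (\<omega> t))) \<le> A}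
     \<le> 1 - \<mu> / (2 * K)"
proof -
  let ?\<mu> = "\<lambda>k. density M (p (par k))"
  let ?Q = "PiM UNIV ?\<mu>"
  interpret Q: nat_pps ?\<mu> by (rule pps) (rule par)
  define X where "X y = ln (p lam y / p t0 y)" for y
  define Z where "Z y = min (X y) K" for y
  have XM[measurable]: "X \<in> borel_measurable M" unfolding X_def using lT tT by auto
  have XQ[measurable]: "(\<lambda>\<omega>. X (\<omega> t)) \<in> borel_measurable ?Q" for t
    by (subst measurable_cong_sets[OF sets_Q refl]) measurable
  have ZQ[measurable]: "(\<lambda>\<omega>. Z (\<omega> t)) \<in> borel_measurable ?Q" for t
    unfolding Z_def by measurable
  define c where "c = real (card I)"
  have c: "1 \<le> c" using I unfolding c_def by (simp add: Suc_le_eq card_gt_0_iff)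
  define U where "U \<omega> = (\<Sum>t\<in>I. Z (\<omega> t))" for \<omega>
  have Zm_t: "Z \<in> borel_measurable (?\<mu> t)" for t
    unfolding Z_def by (subst measurable_cong_sets[OF sets_density refl]) measurable
  have intZt: "integrable ?Q (\<lambda>\<omega>. Z (\<omega> t))" if t: "t \<in> I" for t
  proof -
    have "integrable (?\<mu> t) Z" using intZ parI[OF t] by (simp add: Z_def[abs_def] X_def[abs_def])
    then show "integrable ?Q (\<lambda>\<omega>. Z (\<omega> t))" by (rule Q.integral_coord(2)[OF Zm_t])
  qed
  have intU: "integrable ?Q U" unfolding U_def
    using intZt by (auto simp del: integrable_sum intro!: integrable_sum)
  have EU: "(\<integral>\<omega>. U \<omega> \<partial>?Q) = c * \<mu>"
  proof -
    have "(\<integral>\<omega>. U \<omega> \<partial>?Q) = (\<Sum>t\<in>I. (\<integral>\<omega>. Z (\<omega> t) \<partial>?Q))"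
      unfolding U_def by (rule Bochner_Integration.integral_sum) (rule intZt)
    also have "\<dots> = (\<Sum>t\<in>I. \<mu>)"
    proof (rule sum.cong[OF refl])
      fix t assume t: "t \<in> I"
      show "(\<integral>\<omega>. Z (\<omega> t) \<partial>?Q) = \<mu>"
        using Q.integral_coord(1)[OF Zm_t, of t] parI[OF t] EZ by (simp add: Z_def[abs_def] X_def[abs_def])
    qed
    finally show ?thesis by (simp add: c_def)
  qed
  define H where "H = {\<omega>\<in>space ?Q. c * \<mu> / 2 < U \<omega>}"
  have Hm: "H \<in> sets ?Q" unfolding H_def U_def by measurable
  have ptU: "U \<omega> \<le> c * \<mu> / 2 + (c * K) * indicator H \<omega>" if \<omega>: "\<omega> \<in> space ?Q" for \<omega>
  proof (cases "\<omega> \<in> H")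
    case True
    have "U \<omega> \<le> (\<Sum>t\<in>I. K)" unfolding U_def Z_def by (intro sum_mono) auto
    moreover have "0 \<le> c * \<mu> / 2" using c mu by simp
    ultimately show ?thesis using True by (simp add: c_def)
  next
    case False then show ?thesis using \<omega> by (auto simp: H_def)
  qed
  have "(\<integral>\<omega>. U \<omega> \<partial>?Q) \<le> (\<integral>\<omega>. c * \<mu> / 2 + (c * K) * indicator H \<omega> \<partial>?Q)"
    using intU Hm ptU
    by (intro integral_mono Bochner_Integration.integrable_add Q.P.integrable_const integrable_mult_right integrable_real_indicator)
       (auto simp: Q.P.emeasure_finite less_top[symmetric])
  also have "\<dots> = c * \<mu> / 2 + c * K * measure ?Q H"
  proof -
    have i1: "integrable ?Q (\<lambda>\<omega>. c * K * indicator H \<omega>)"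
      using Hm by (intro integrable_mult_right integrable_real_indicator) (auto simp: Q.P.emeasure_finite less_top[symmetric])
    have "(\<integral>\<omega>. c * \<mu> / 2 + c * K * indicator H \<omega> \<partial>?Q) = (\<integral>\<omega>. c * \<mu> / 2 \<partial>?Q) + (\<integral>\<omega>. c * K * indicator H \<omega> \<partial>?Q)"
      by (rule Bochner_Integration.integral_add[OF Q.P.integrable_const i1])
    then show ?thesis using Hm by (simp add: Q.P.prob_space)
  qed
  finally have "c * \<mu> / 2 \<le> c * K * measure ?Q H" unfolding EU by simp
  then have mH: "\<mu> / (2 * K) \<le> measure ?Q H"
    using c K by (simp add: field_simps)
  have sub: "{\<omega>\<in>space ?Q. (\<Sum>t\<in>I. ln (p lam (\<omega> t) / p t0 (\<omega> t))) \<le> A} \<subseteq> space ?Q - H"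
  proof safe
    fix \<omega> assume \<omega>: "\<omega> \<in> space ?Q" and le: "(\<Sum>t\<in>I. ln (p lam (\<omega> t) / p t0 (\<omega> t))) \<le> A" and H: "\<omega> \<in> H"
    have "U \<omega> \<le> (\<Sum>t\<in>I. ln (p lam (\<omega> t) / p t0 (\<omega> t)))"
      unfolding U_def Z_def X_def by (intro sum_mono) auto
    then show False using le A H by (auto simp: H_def c_def)
  qed
  have "measure ?Q {\<omega>\<in>space ?Q. (\<Sum>t\<in>I. ln (p lam (\<omega> t) / p t0 (\<omega> t))) \<le> A} \<le> measure ?Q (space ?Q - H)"
    using sub Hm by (intro Q.P.finite_measure_mono) auto
  also have "\<dots> = 1 - measure ?Q H" using Q.P.prob_compl[OF Hm] by simp
  finally show ?thesis using mH by simp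
qed

end



context cp_setup begin

lemma tau_gt_imp:
  assumes e: "e \<in> {1..E}" and gt: "enat n' < tau_o p T N E \<theta> \<Theta> \<epsilon> A \<omega>"
    and lam: "lam \<in> Lam \<Theta> \<theta> \<epsilon> e"
    and n: "1 \<le> n" "n \<le> n'" and k: "1 \<le> k" "k \<le> n"
  shows "Ssum e lam k n \<omega> \<le> A"
proof (rule ccontr)
  assume "\<not> Ssum e lam k n \<omega> \<le> A"
  then have SA: "ereal A < ereal (Ssum e lam k n \<omega>)" by simp
  let ?W = "\<lambda>n. Wstat p T N E \<theta> (Lam \<Theta> \<theta> \<epsilon> e) e n \<omega>"
  have "ereal (Ssum e lam k n \<omega>) \<le> ?W n"
    unfolding Wstat_def Ssum_def using k lam
    by (intro SUP_upper2[of k] SUP_upper2[of lam]) auto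
  with SA have Wn: "ereal A < ?W n" by order
  have "tau_o p T N E \<theta> \<Theta> \<epsilon> A \<omega> \<le> tau_e p T N E \<theta> (Lam \<Theta> \<theta> \<epsilon> e) A e \<omega>"
    unfolding tau_o_def using e by (intro Min_le) auto
  moreover have "tau_e p T N E \<theta> (Lam \<Theta> \<theta> \<epsilon> e) A e \<omega> \<le> enat n"
  proof -
    have ex: "\<exists>n\<ge>1. ?W n > ereal A" using Wn n by auto
    have "(LEAST n. n \<ge> 1 \<and> ?W n > ereal A) \<le> n" using Wn n by (intro Least_le) auto
    then show ?thesis unfolding tau_e_def using ex by auto
  qed
  ultimately show False using gt n by (metis enat_ord_simps(1) leD order.trans)
qed

lemma delay_bound:
  assumes e: "e \<in> {1..E}" and lam: "lam \<in> Lam \<Theta> \<theta> \<epsilon> e"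
  shows "\<exists>C1 C2. 0 \<le> C1 \<and> (\<forall>A>0.
     (\<integral>\<^sup>+ \<omega>. ennreal_of_enat (tau_o p T N E \<theta> \<Theta> \<epsilon> A \<omega>) \<partial>(P_change M p T N E \<theta> 1 e lam))
       \<le> ennreal (C1 * A + C2))"
proof -
  obtain K \<mu> where K: "0 < K" and mu: "0 < \<mu>" "\<mu> \<le> K"
    and intZ: "integrable (density M (p lam)) (\<lambda>y. min (ln (p lam y / p (\<theta> e) y)) K)"
    and EZ: "(\<integral>y. min (ln (p lam y / p (\<theta> e) y)) K \<partial>density M (p lam)) = \<mu>"
    using trunc_exists[OF e lam] by blast
  have lT: "lam \<in> \<Theta>" using lam Lam_sub by auto
  have tT: "\<theta> e \<in> \<Theta>" using theta_in[OF e] .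
  define C1 where "C1 = 4 * real T * K / \<mu>^2"
  define C2 where "C2 = 4 * real T * K / \<mu>"
  have "\<forall>A>0. (\<integral>\<^sup>+ \<omega>. ennreal_of_enat (tau_o p T N E \<theta> \<Theta> \<epsilon> A \<omega>) \<partial>(P_change M p T N E \<theta> 1 e lam))
       \<le> ennreal (C1 * A + C2)"
  proof (intro allI impI)
    fix A :: real assume A: "0 < A"
    define par where "par k = (if 1 \<le> k \<and> b k = e then lam else \<theta> (b k))" for k
    have par_in: "par k \<in> \<Theta>" for k unfolding par_def using lT theta_b by auto
    let ?\<mu> = "\<lambda>k. density M (p (par k))"
    let ?Q = "PiM UNIV ?\<mu>"
    interpret Q: nat_pps ?\<mu> by (rule pps) (rule par_in)
    have Qdef: "P_change M p T N E \<theta> 1 e lam = ?Q" by (simp add: P_change_def par_def)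
    define m where "m = nat \<lceil>2 * A / \<mu>\<rceil> + 1"
    define L where "L = m * T"
    have m1: "1 \<le> m" unfolding m_def by simp
    have L1: "1 \<le> L" unfolding L_def using m1 T_pos by simp
    define Kb where "Kb i = {i * L + 1 .. i * L + L}" for i
    define Ib where "Ib i = {t\<in>Kb i. b t = e}" for i
    define X where "X y = ln (p lam y / p (\<theta> e) y)" for y
    have XM[measurable]: "X \<in> borel_measurable M" unfolding X_def using lT tT by auto
    have fin_Ib: "finite (Ib i)" for i unfolding Ib_def Kb_def by auto
    have card_Ib: "m \<le> card (Ib i)" for i
    proof -
      define g where "g j = (i * m + j) * T + N e" for j
      have "g ` {..<m} \<subseteq> Ib i"
      proof
        fix x assume "x \<in> g ` {..<m}"
        then obtain j where j: "j < m" and x: "x = g j" by auto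
        have lo: "i * L + 1 \<le> x"
          using N_pos[OF e] unfolding x g_def L_def by (simp add: algebra_simps)
        have "(i * m + j) * T + T \<le> (i * m + m) * T"
          using j by (metis add.commute add_Suc_right le_add2 mult_Suc mult_le_mono1 nat_add_left_cancel_le Suc_leI)
        then have hi: "x \<le> i * L + L"
          using N_leT[of e] e unfolding x g_def L_def by (simp add: algebra_simps)
        have "b x = e" unfolding x g_def by (rule batch_special[OF e])
        then show "x \<in> Ib i" using lo hi unfolding Ib_def Kb_def by auto
      qed
      moreover have "inj_on g {..<m}" unfolding g_def inj_on_def using T_pos by auto
      ultimately show ?thesis using card_inj_on_le[of g "{..<m}" "Ib i"] fin_Ib by auto
    qed
    have mA: "2 * A / \<mu> \<le> real m"
    proof -
      have "2 * A / \<mu> \<le> real_of_int \<lceil>2 * A / \<mu>\<rceil>" by (rule le_of_int_ceiling)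
      also have "\<dots> \<le> real m" unfolding m_def using A mu by linarith
      finally show ?thesis .
    qed
    have mU: "real m \<le> 2 * A / \<mu> + 2"
    proof -
      have "real_of_int \<lceil>2 * A / \<mu>\<rceil> \<le> 2 * A / \<mu> + 1" by linarith
      moreover have "0 \<le> 2 * A / \<mu>" using A mu by simp
      ultimately show ?thesis unfolding m_def by linarith
    qed
    define r where "r = 1 - \<mu> / (2 * K)"
    have r: "0 \<le> r" "r < 1" unfolding r_def using K mu by (auto simp: field_simps)
    define Aset where "Aset i = {x\<in>space (PiM (Kb i) ?\<mu>). (\<Sum>t\<in>Ib i. X (x t)) \<le> A}" for i
    have Aset_m: "Aset i \<in> sets (PiM (Kb i) ?\<mu>)" for i
    proof -
      have "(\<lambda>x. \<Sum>t\<in>Ib i. X (x t)) \<in> borel_measurable (PiM (Kb i) (\<lambda>_. M))"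
      proof (rule borel_measurable_sum)
        fix t assume "t \<in> Ib i"
        then have "t \<in> Kb i" by (simp add: Ib_def)
        from measurable_component_singleton[OF this, of "\<lambda>_. M"] XM
        show "(\<lambda>x. X (x t)) \<in> borel_measurable (PiM (Kb i) (\<lambda>_. M))" by (rule measurable_compose)
      qed
      then have "(\<lambda>x. \<Sum>t\<in>Ib i. X (x t)) \<in> borel_measurable (PiM (Kb i) ?\<mu>)"
        by (subst measurable_cong_sets[OF sets_Q refl])
      then show ?thesis unfolding Aset_def by measurable
    qed
    define Ev where "Ev i = {\<omega>\<in>space ?Q. restrict \<omega> (Kb i) \<in> Aset i}" for i
    have Ev_m: "Ev i \<in> sets ?Q" for i
    proof -
      have "Ev i = (\<lambda>\<omega>. restrict \<omega> (Kb i)) -` Aset i \<inter> space ?Q" unfolding Ev_def by auto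
      also have "\<dots> \<in> sets ?Q"
        by (rule measurable_sets[OF measurable_restrict_subset Aset_m]) auto
      finally show ?thesis .
    qed
    have Ev_eq: "Ev i = {\<omega>\<in>space ?Q. (\<Sum>t\<in>Ib i. ln (p lam (\<omega> t) / p (\<theta> e) (\<omega> t))) \<le> A}" for i
    proof -
      have "\<omega> \<in> space ?Q \<Longrightarrow> restrict \<omega> (Kb i) \<in> space (PiM (Kb i) ?\<mu>)" for \<omega>
        by (auto simp: space_PiM)
      moreover have "(\<Sum>t\<in>Ib i. X (restrict \<omega> (Kb i) t)) = (\<Sum>t\<in>Ib i. X (\<omega> t))" for \<omega>
        by (intro sum.cong) (auto simp: Ib_def)
      ultimately show ?thesis unfolding Ev_def Aset_def X_def by auto
    qed
    have Ev_le: "measure ?Q (Ev i) \<le> r" for i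
    proof -
      have ne: "Ib i \<noteq> {}" using card_Ib[of i] m1 by auto
      have parI: "par t = lam" if "t \<in> Ib i" for t
        using that unfolding Ib_def Kb_def par_def by auto
      have "A \<le> real (card (Ib i)) * \<mu> / 2"
      proof -
        have "A \<le> real m * \<mu> / 2" using mA mu by (simp add: field_simps)
        also have "\<dots> \<le> real (card (Ib i)) * \<mu> / 2" using card_Ib[of i] mu by simp
        finally show ?thesis .
      qed
      from block_prob[OF par_in lT tT fin_Ib ne parI K mu intZ EZ this]
      show ?thesis unfolding Ev_eq r_def .
    qed
    define F where "F j = {\<omega>\<in>space ?Q. \<forall>i<j. restrict \<omega> (Kb i) \<in> Aset i}" for j
    have F_m: "F j \<in> sets ?Q" for j
    proof -
      have "F j = space ?Q \<inter> (\<Inter>i<j. Ev i)" unfolding F_def Ev_def by auto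
      then show ?thesis using Ev_m by auto
    qed
    have disj: "disjoint_family Kb"
      unfolding disjoint_family_on_def
    proof (intro ballI impI)
      fix i i' :: nat assume "i \<noteq> i'"
      then consider "i < i'" | "i' < i" by linarith
      then show "Kb i \<inter> Kb i' = {}"
      proof cases
        case 1
        then have "(i + 1) * L \<le> i' * L" by (intro mult_le_mono1) auto
        then show ?thesis unfolding Kb_def by (auto simp: algebra_simps)
      next
        case 2
        then have "(i' + 1) * L \<le> i * L" by (intro mult_le_mono1) auto
        then show ?thesis unfolding Kb_def by (auto simp: algebra_simps)
      qed
    qed
    have F_le: "measure ?Q (F j) \<le> r ^ j" for j
    proof (cases "j = 0")
      case True
      then show ?thesis unfolding F_def by (simp add: Q.P.prob_space)
    next
      case False
      have "F j = (\<Inter>i<j. {\<omega>\<in>space ?Q. restrict \<omega> (Kb i) \<in> Aset i})"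
        unfolding F_def using False by auto
      then have "measure ?Q (F j) = (\<Prod>i<j. measure ?Q (Ev i))"
        unfolding Ev_def by (simp add: Q.indep_blocks[OF disj Aset_m False])
      also have "\<dots> \<le> (\<Prod>i<j. r)" by (intro prod_mono) (auto simp: Ev_le)
      finally show ?thesis by simp
    qed
    have inF: "\<omega> \<in> F j" if \<omega>: "\<omega> \<in> space ?Q" and gt: "enat (j * L) < tau_o p T N E \<theta> \<Theta> \<epsilon> A \<omega>" for \<omega> j
    proof -
      have "restrict \<omega> (Kb i) \<in> Aset i" if i: "i < j" for i
      proof -
        have "(i + 1) * L \<le> j * L" using i by (intro mult_le_mono1) auto
        then have "Ssum e lam (i * L + 1) (i * L + L) \<omega> \<le> A"
          using L1 by (intro tau_gt_imp[OF e gt lam]) (auto simp: algebra_simps)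
        then have "\<omega> \<in> Ev i" unfolding Ev_eq using \<omega> by (simp add: Ssum_def Ib_def Kb_def)
        then show ?thesis unfolding Ev_def by auto
      qed
      then show ?thesis unfolding F_def using \<omega> by auto
    qed
    have cnt: "of_nat t \<le> of_nat L * (\<Sum>j. indicator (F j) \<omega> :: ennreal)"
      if \<omega>: "\<omega> \<in> space ?Q" and t: "enat t \<le> tau_o p T N E \<theta> \<Theta> \<epsilon> A \<omega>" for \<omega> t
    proof (cases "t = 0")
      case True then show ?thesis by simp
    next
      case False
      define d where "d = (t - 1) div L + 1"
      have jF: "\<omega> \<in> F j" if "j < d" for j
      proof -
        have "j \<le> (t - 1) div L" using that unfolding d_def by simp
        then have "j * L \<le> (t - 1) div L * L" by (rule mult_le_mono1)
        also have "\<dots> \<le> t - 1" by (metis div_mult_mod_eq le_add1)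
        finally have "j * L < t" using False by linarith
        then have "enat (j * L) < tau_o p T N E \<theta> \<Theta> \<epsilon> A \<omega>" using t
          by (meson enat_ord_simps(2) order_less_le_trans)
        then show ?thesis by (rule inF[OF \<omega>])
      qed
      have tle: "t \<le> L * d"
      proof -
        have "t - 1 = (t - 1) div L * L + (t - 1) mod L" by simp
        moreover have "(t - 1) mod L < L" using L1 by simp
        ultimately have "t - 1 < ((t - 1) div L + 1) * L" by (metis add_less_cancel_left distrib_right mult_1)
        then show ?thesis unfolding d_def by (simp add: mult.commute)
      qed
      have "(of_nat d :: ennreal) = (\<Sum>j<d. indicator (F j) \<omega>)" using jF by simp
      also have "\<dots> \<le> (\<Sum>j. indicator (F j) \<omega>)"
        by (rule sum_le_suminf) auto
      finally have "(of_nat d :: ennreal) \<le> (\<Sum>j. indicator (F j) \<omega>)" .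
      then have "(of_nat L * of_nat d :: ennreal) \<le> of_nat L * (\<Sum>j. indicator (F j) \<omega>)"
        by (rule mult_left_mono) simp
      moreover have "(of_nat t :: ennreal) \<le> of_nat L * of_nat d"
        using tle by (simp flip: of_nat_mult)
      ultimately show ?thesis by order
    qed
    have pt: "ennreal_of_enat (tau_o p T N E \<theta> \<Theta> \<epsilon> A \<omega>) \<le> of_nat L * (\<Sum>j. indicator (F j) \<omega>)"
      if \<omega>: "\<omega> \<in> space ?Q" for \<omega>
    proof (cases "tau_o p T N E \<theta> \<Theta> \<epsilon> A \<omega>")
      case (enat t)
      then show ?thesis using cnt[OF \<omega>, of t] by simp
    next
      case infinity
      have "(SUP t. of_nat t :: ennreal) \<le> of_nat L * (\<Sum>j. indicator (F j) \<omega>)"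
        using cnt[OF \<omega>] infinity by (intro SUP_least) simp
      then have "of_nat L * (\<Sum>j. indicator (F j) \<omega>) = (top :: ennreal)"
        by (simp add: ennreal_SUP_of_nat_eq_top top_unique)
      then show ?thesis by simp
    qed
    have "(\<integral>\<^sup>+ \<omega>. ennreal_of_enat (tau_o p T N E \<theta> \<Theta> \<epsilon> A \<omega>) \<partial>?Q)
        \<le> (\<integral>\<^sup>+ \<omega>. of_nat L * (\<Sum>j. indicator (F j) \<omega>) \<partial>?Q)"
      by (intro nn_integral_mono pt)
    also have "\<dots> = of_nat L * (\<Sum>j. emeasure ?Q (F j))"
      using F_m by (simp add: nn_integral_cmult nn_integral_suminf)
    also have "\<dots> \<le> of_nat L * (\<Sum>j. ennreal (r ^ j))"
      using F_le by (intro mult_left_mono suminf_le) (auto simp: Q.P.emeasure_eq_measure intro: ennreal_leI)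
    also have "(\<Sum>j. ennreal (r ^ j)) = ennreal (1 / (1 - r))"
      using r by (subst suminf_ennreal2) (auto simp: suminf_geometric)
    also have "of_nat L * ennreal (1 / (1 - r)) = ennreal (real L * (2 * K / \<mu>))"
    proof -
      have "1 / (1 - r) = 2 * K / \<mu>" unfolding r_def using mu K by (simp add: field_simps)
      moreover have "0 \<le> 2 * K / \<mu>" using mu K by simp
      ultimately show ?thesis by (simp add: ennreal_of_nat_eq_real_of_nat ennreal_mult[symmetric] del: times_divide_eq_right)
    qed
    also have "\<dots> \<le> ennreal (C1 * A + C2)"
    proof (rule ennreal_leI)
      have "real L * (2 * K / \<mu>) = real m * (real T * 2 * K / \<mu>)" unfolding L_def by (simp add: field_simps)
      also have "\<dots> \<le> (2 * A / \<mu> + 2) * (real T * 2 * K / \<mu>)"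
        using mU K mu T_pos by (intro mult_right_mono) auto
      also have "\<dots> = C1 * A + C2" unfolding C1_def C2_def using mu by (simp add: field_simps power2_eq_square)
      finally show "real L * (2 * K / \<mu>) \<le> C1 * A + C2" .
    qed
    finally show "(\<integral>\<^sup>+ \<omega>. ennreal_of_enat (tau_o p T N E \<theta> \<Theta> \<epsilon> A \<omega>) \<partial>(P_change M p T N E \<theta> 1 e lam))
       \<le> ennreal (C1 * A + C2)" unfolding Qdef .
  qed
  moreover have "0 \<le> C1" unfolding C1_def using K mu by simp
  ultimately show ?thesis by blast
qed

end



lemma lim_c_ln: "((\<lambda>\<beta>::real. c / ln \<beta>) \<longlongrightarrow> 0) at_top"
  by (intro tendsto_divide_0[OF tendsto_const] filterlim_at_top_imp_at_infinity ln_at_top)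

theorem theorem1:
  fixes M :: "'a measure" and p :: "real \<Rightarrow> 'a \<Rightarrow> real" and \<Theta> :: "real set"
    and T E :: nat and N :: "nat \<Rightarrow> nat" and \<theta> :: "nat \<Rightarrow> real" and \<epsilon> :: real
  assumes dens: "is_density_family M p \<Theta>"
    and KL_fin: "\<And>a b. a \<in> \<Theta> \<Longrightarrow> b \<in> \<Theta> \<Longrightarrow> a \<noteq> b \<Longrightarrow> KL_finite M p a b \<and> KL M p a b > 0"
    and T_pos: "T \<ge> 1"
    and N0: "N 0 = 0" and NE: "N E = T"
    and N_mono: "\<And>j. j < E \<Longrightarrow> N j < N (Suc j)"
    and theta_in: "\<And>e. e \<in> {1..E} \<Longrightarrow> \<theta> e \<in> \<Theta>"
    and eps_pos: "\<epsilon> > 0"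
    and Lam_finite: "\<And>e. e \<in> {1..E} \<Longrightarrow> finite (Lam \<Theta> \<theta> \<epsilon> e)"
  shows "\<exists>A :: real \<Rightarrow> real.
           ((\<lambda>\<beta>. A \<beta> / ln \<beta>) \<longlongrightarrow> 1) at_top \<and> (\<forall>\<^sub>F \<beta> in at_top. A \<beta> > 0) \<and>
           (\<exists>h :: real \<Rightarrow> real. (h \<longlongrightarrow> 0) at_top \<and>
              (\<forall>\<^sub>F \<beta> in at_top.
                 (\<integral>\<^sup>+ \<omega>. ennreal_of_enat (tau_o p T N E \<theta> \<Theta> \<epsilon> (A \<beta>) \<omega>) \<partial>(P_inf M p T N E \<theta>))
                   \<ge> ennreal (\<beta> * (1 + h \<beta>)))) \<and>
           (\<exists>C > 0. \<forall>e \<in> {1..E}. \<forall>lam \<in> Lam \<Theta> \<theta> \<epsilon> e.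
              \<exists>g :: real \<Rightarrow> real. (g \<longlongrightarrow> 0) at_top \<and>
                (\<forall>\<^sub>F \<beta> in at_top.
                   (\<integral>\<^sup>+ \<omega>. ennreal_of_enat (tau_o p T N E \<theta> \<Theta> \<epsilon> (A \<beta>) \<omega>) \<partial>(P_change M p T N E \<theta> 1 e lam))
                     \<le> ennreal (C * ln \<beta> * (1 + g \<beta>))))"
proof -
  interpret cp_setup M p \<Theta> T E N \<theta> \<epsilon>
    by unfold_locales (use assms in auto)
  define LL where "LL = (\<Union>e\<in>{1..E}. Lam \<Theta> \<theta> \<epsilon> e)"
  define Lt where "Lt = real (E * card LL)"
  have Lt0: "0 \<le> Lt" unfolding Lt_def by simp
  define c where "c = ln (6 * (Lt + 1))"
  have c0: "0 < c" unfolding c_def using Lt0 by simp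
  define A where "A \<beta> = ln \<beta> + c" for \<beta> :: real
  have limA: "((\<lambda>\<beta>. A \<beta> / ln \<beta>) \<longlongrightarrow> 1) at_top"
  proof -
    have "((\<lambda>\<beta>. 1 + c / ln \<beta>) \<longlongrightarrow> 1 + 0) at_top"
      by (intro tendsto_add tendsto_const lim_c_ln)
    moreover have "eventually (\<lambda>\<beta>. 1 + c / ln \<beta> = A \<beta> / ln \<beta>) at_top"
      using eventually_gt_at_top[of 1]
      by eventually_elim (auto simp: A_def field_simps)
    ultimately show ?thesis by (simp add: tendsto_cong)
  qed
  have Apos: "\<forall>\<^sub>F \<beta> in at_top. A \<beta> > 0"
    using eventually_ge_at_top[of 1]
    by eventually_elim (use c0 in \<open>auto simp: A_def intro: add_nonneg_pos\<close>)
  have ARL: "\<forall>\<^sub>F \<beta> in at_top.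
       (\<integral>\<^sup>+ \<omega>. ennreal_of_enat (tau_o p T N E \<theta> \<Theta> \<epsilon> (A \<beta>) \<omega>) \<partial>(P_inf M p T N E \<theta>))
         \<ge> ennreal (\<beta> * (1 + 0))"
    using eventually_ge_at_top[of 1]
  proof eventually_elim
    case (elim \<beta>)
    define n where "n = nat \<lceil>3 * \<beta>\<rceil>"
    have n1: "3 * \<beta> \<le> real n" unfolding n_def by linarith
    have n2: "real n \<le> 4 * \<beta>" unfolding n_def using elim by linarith
    have expA: "exp (- A \<beta>) = 1 / (\<beta> * (6 * (Lt + 1)))"
    proof -
      have "exp (- A \<beta>) = inverse (exp (ln \<beta>) * exp (ln (6 * (Lt + 1))))"
        unfolding A_def c_def by (simp only: exp_minus exp_add)
      also have "\<dots> = inverse (\<beta> * (6 * (Lt + 1)))" using elim Lt0 by simp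
      finally show ?thesis by (simp add: inverse_eq_divide)
    qed
    have "real n * Lt * exp (- A \<beta>) \<le> 4 * \<beta> * Lt * (1 / (\<beta> * (6 * (Lt + 1))))"
      unfolding expA using n2 Lt0 elim by (intro mult_right_mono) auto
    also have "\<dots> = 2 / 3 * (Lt / (Lt + 1))"
    proof -
      have b0: "\<beta> \<noteq> 0" and l0: "Lt + 1 \<noteq> 0" using elim Lt0 by auto
      show ?thesis using b0 l0 by (simp add: divide_simps)
    qed
    also have "\<dots> \<le> 2 / 3 * 1" using Lt0 by (intro mult_left_mono) auto
    finally have le: "real n * Lt * exp (- A \<beta>) \<le> 2 / 3" by simp
    have "\<beta> \<le> real n * (1 / 3)" using n1 by simp
    also have "\<dots> \<le> real n * (1 - real n * Lt * exp (- A \<beta>))"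
      using le by (intro mult_left_mono) auto
    finally have "ennreal \<beta> \<le> ennreal (real n * (1 - real n * real (E * card LL) * exp (- A \<beta>)))"
      by (intro ennreal_leI) (simp add: Lt_def)
    also have "\<dots> \<le> (\<integral>\<^sup>+ \<omega>. ennreal_of_enat (tau_o p T N E \<theta> \<Theta> \<epsilon> (A \<beta>) \<omega>) \<partial>(P_inf M p T N E \<theta>))"
      unfolding LL_def by (rule ARL_bound)
    finally show ?case by simp
  qed
  define SL where "SL = {(e, l). e \<in> {1..E} \<and> l \<in> Lam \<Theta> \<theta> \<epsilon> e}"
  have finSL: "finite SL"
  proof -
    have "SL \<subseteq> {1..E} \<times> LL" unfolding SL_def LL_def by auto
    moreover have "finite LL" unfolding LL_def using Lam_finite by auto
    ultimately show ?thesis by (meson finite_SigmaI finite_atLeastAtMost finite_subset)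
  qed
  have "\<forall>el\<in>SL. \<exists>CC. 0 \<le> fst CC \<and> (\<forall>A>0.
     (\<integral>\<^sup>+ \<omega>. ennreal_of_enat (tau_o p T N E \<theta> \<Theta> \<epsilon> A \<omega>) \<partial>(P_change M p T N E \<theta> 1 (fst el) (snd el)))
       \<le> ennreal (fst CC * A + snd CC))"
  proof
    fix el assume "el \<in> SL"
    then obtain e l where el: "el = (e, l)" "e \<in> {1..E}" "l \<in> Lam \<Theta> \<theta> \<epsilon> e" unfolding SL_def by auto
    from delay_bound[OF el(2,3)] obtain C1 C2 where "0 \<le> C1" "\<forall>A>0.
     (\<integral>\<^sup>+ \<omega>. ennreal_of_enat (tau_o p T N E \<theta> \<Theta> \<epsilon> A \<omega>) \<partial>(P_change M p T N E \<theta> 1 e l))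
       \<le> ennreal (C1 * A + C2)" by blast
    then show "\<exists>CC. 0 \<le> fst CC \<and> (\<forall>A>0.
     (\<integral>\<^sup>+ \<omega>. ennreal_of_enat (tau_o p T N E \<theta> \<Theta> \<epsilon> A \<omega>) \<partial>(P_change M p T N E \<theta> 1 (fst el) (snd el)))
       \<le> ennreal (fst CC * A + snd CC))" using el by (intro exI[of _ "(C1, C2)"]) auto
  qed
  then obtain CC where CC: "\<And>el. el \<in> SL \<Longrightarrow> 0 \<le> fst (CC el) \<and> (\<forall>A>0.
     (\<integral>\<^sup>+ \<omega>. ennreal_of_enat (tau_o p T N E \<theta> \<Theta> \<epsilon> A \<omega>) \<partial>(P_change M p T N E \<theta> 1 (fst el) (snd el)))
       \<le> ennreal (fst (CC el) * A + snd (CC el)))"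
    by metis
  define C where "C = 1 + (\<Sum>el\<in>SL. fst (CC el))"
  have C1le: "fst (CC el) \<le> C - 1" if "el \<in> SL" for el
    unfolding C_def using that finSL CC by (auto intro!: member_le_sum)
  have Cpos: "0 < C" using C1le CC unfolding C_def by (auto intro!: sum_nonneg add_pos_nonneg)
  have delay: "\<forall>e \<in> {1..E}. \<forall>lam \<in> Lam \<Theta> \<theta> \<epsilon> e.
              \<exists>g :: real \<Rightarrow> real. (g \<longlongrightarrow> 0) at_top \<and>
                (\<forall>\<^sub>F \<beta> in at_top.
                   (\<integral>\<^sup>+ \<omega>. ennreal_of_enat (tau_o p T N E \<theta> \<Theta> \<epsilon> (A \<beta>) \<omega>) \<partial>(P_change M p T N E \<theta> 1 e lam))
                     \<le> ennreal (C * ln \<beta> * (1 + g \<beta>)))"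
  proof (intro ballI)
    fix e lam assume e: "e \<in> {1..E}" and lam: "lam \<in> Lam \<Theta> \<theta> \<epsilon> e"
    have elS: "(e, lam) \<in> SL" unfolding SL_def using e lam by auto
    define C1 where "C1 = fst (CC (e, lam))"
    define C2 where "C2 = snd (CC (e, lam))"
    have C10: "0 \<le> C1" and bnd: "\<And>A. A > 0 \<Longrightarrow>
       (\<integral>\<^sup>+ \<omega>. ennreal_of_enat (tau_o p T N E \<theta> \<Theta> \<epsilon> A \<omega>) \<partial>(P_change M p T N E \<theta> 1 e lam))
       \<le> ennreal (C1 * A + C2)" using CC[OF elS] unfolding C1_def C2_def by auto
    have C1C: "C1 < C" using C1le[OF elS] unfolding C1_def by simp
    define D where "D = C1 * c + C2"
    define g where "g \<beta> = max 0 ((C1 * ln \<beta> + D) / (C * ln \<beta>) - 1)" for \<beta>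
    have "((\<lambda>\<beta>. max 0 (C1 / C - 1 + (D / C) / ln \<beta>)) \<longlongrightarrow> max 0 (C1 / C - 1 + 0)) at_top"
      by (intro tendsto_max tendsto_add tendsto_const lim_c_ln)
    moreover have "max 0 (C1 / C - 1 + 0) = 0" using C1C Cpos by (simp add: field_simps)
    moreover have "eventually (\<lambda>\<beta>. max 0 (C1 / C - 1 + (D / C) / ln \<beta>) = g \<beta>) at_top"
      using eventually_gt_at_top[of 1]
    proof eventually_elim
      case (elim \<beta>)
      have "ln \<beta> \<noteq> 0" "C \<noteq> 0" using elim Cpos by auto
      then have "C1 / C - 1 + (D / C) / ln \<beta> = (C1 * ln \<beta> + D) / (C * ln \<beta>) - 1"
        by (simp add: divide_simps) (simp add: algebra_simps)
      then show ?case by (simp add: g_def)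
    qed
    ultimately have glim: "(g \<longlongrightarrow> 0) at_top" by (simp add: tendsto_cong)
    have "\<forall>\<^sub>F \<beta> in at_top.
        (\<integral>\<^sup>+ \<omega>. ennreal_of_enat (tau_o p T N E \<theta> \<Theta> \<epsilon> (A \<beta>) \<omega>) \<partial>(P_change M p T N E \<theta> 1 e lam))
           \<le> ennreal (C * ln \<beta> * (1 + g \<beta>))"
      using eventually_gt_at_top[of 1] Apos
    proof eventually_elim
      case (elim \<beta>)
      have lnp: "0 < ln \<beta>" using elim by simp
      have "C1 * A \<beta> + C2 = C1 * ln \<beta> + D" unfolding A_def D_def by (simp add: algebra_simps)
      also have "\<dots> = C * ln \<beta> * ((C1 * ln \<beta> + D) / (C * ln \<beta>))" using lnp Cpos by simp
      also have "\<dots> \<le> C * ln \<beta> * (1 + g \<beta>)"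
        using lnp Cpos by (intro mult_left_mono) (auto simp: g_def)
      finally show ?case using bnd[OF elim(2)] by (meson ennreal_leI order.trans)
    qed
    with glim show "\<exists>g :: real \<Rightarrow> real. (g \<longlongrightarrow> 0) at_top \<and>
                (\<forall>\<^sub>F \<beta> in at_top.
                   (\<integral>\<^sup>+ \<omega>. ennreal_of_enat (tau_o p T N E \<theta> \<Theta> \<epsilon> (A \<beta>) \<omega>) \<partial>(P_change M p T N E \<theta> 1 e lam))
                     \<le> ennreal (C * ln \<beta> * (1 + g \<beta>)))" by blast
  qed
  show ?thesis
    apply (rule exI[of _ A])
    apply (intro conjI limA Apos)
     apply (rule exI[of _ "\<lambda>_. 0"])
     apply (use ARL in simp)
    apply (rule exI[of _ C])
    using Cpos delay by blast
qed



end
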